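(* Let $V$ be a real Hilbert space, let $W\subset V$ be a subspace of finite dimension $m$, and let $P_W$ denote the orthogonal projection onto $W$. A map $A:W\to V$ has the form $A(w)=w+B(w)$ for all $w\in W$, with $B:W\to W^\perp$ affine, if and only if there exist $\bar u\in V$ and a linear subspace $V_n\subset V$ of dimension $n\le m$ with $V_n\cap W^\perp=\{0\}$ such that $A$ coincides with the affine PBDW algorithm for $\bar u+V_n$, namely $$A(w)=\operatorname{argmin}\{\operatorname{dist}(v,\bar u+V_n)\;:\; v\in w+W^\perp\}\quad\text{for all } w\in W.$$
   Context: $W^\perp$ is the orthogonal complement of $W$ in $V$, and $\operatorname{dist}(v,S)=\inf_{s\in S}\|v-s\|$. The condition $V_n\cap W^\perp=\{0\}$ guarantees that the minimizer in the definition of the affine PBDW algorithm exists and is unique. *)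

theory Defs
  imports "HOL-Analysis.Analysis"
begin

definition fin_dim_subspace :: "'a::real_vector set \<Rightarrow> bool" where
  "fin_dim_subspace S \<longleftrightarrow> subspace S \<and> (\<exists>B. finite B \<and> S = span B)"

definition affine_map_on :: "'a::real_vector set \<Rightarrow> ('a \<Rightarrow> 'b::real_vector) \<Rightarrow> bool" where
  "affine_map_on S f \<longleftrightarrow>
     (\<forall>x\<in>S. \<forall>y\<in>S. \<forall>t::real. f (t *\<^sub>R x + (1 - t) *\<^sub>R y) = t *\<^sub>R f x + (1 - t) *\<^sub>R f y)"

definition affine_pbdw :: "'a::real_inner set \<Rightarrow> 'a \<Rightarrow> 'a set \<Rightarrow> 'a \<Rightarrow> 'a" where
  "affine_pbdw W ubar Vn w =
     (ARG_MIN (\<lambda>v. infdist v ((+) ubar ` Vn)) v. v \<in> (+) w ` (W\<^sup>\<bottom>))"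

end

theory Submission
  imports Defs
begin

lemma decomp:
  fixes S :: "'a::real_inner set"
  assumes "finite S"
  shows "\<exists>p\<in>span S. \<forall>y\<in>span S. inner (x - p) y = 0"
  using assms
proof (induction S arbitrary: x rule: finite_induct)
  case empty
  then show ?case by (auto intro: span_zero)
next
  case (insert a S)
  obtain pa where pa: "pa \<in> span S" "\<forall>y\<in>span S. inner (a - pa) y = 0"
    using insert.IH by blast
  obtain px where px: "px \<in> span S" "\<forall>y\<in>span S. inner (x - px) y = 0"
    using insert.IH by blast
  define a' where "a' = a - pa"
  define r where "r = x - px"
  define c where "c = inner r a' / inner a' a'"
  define p where "p = px + c *\<^sub>R a'"
  have sub: "span S \<subseteq> span (insert a S)" by (simp add: span_mono subset_insertI)
  have "a' \<in> span (insert a S)"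
    unfolding a'_def using pa sub by (meson span_base insertI1 span_diff subsetD)
  then have pin: "p \<in> span (insert a S)"
    unfolding p_def using px sub by (meson span_add span_scale subsetD)
  have ra': "inner (r - c *\<^sub>R a') a' = 0"
  proof (cases "inner a' a' = 0")
    case True then show ?thesis by simp
  next
    case False then show ?thesis by (simp add: c_def inner_diff_left)
  qed
  have a'S: "inner a' y = 0" if "y \<in> span S" for y using pa that a'_def by simp
  have rS: "inner r y = 0" if "y \<in> span S" for y using px that r_def by simp
  have "orthogonal (x - p) y" if "y \<in> insert a S" for y
  proof (cases "y = a")
    case True
    have "inner (r - c *\<^sub>R a') pa = 0"
      using a'S rS pa(1) by (simp add: inner_diff_left)
    then have "inner (r - c *\<^sub>R a') (a' + pa) = 0" using ra' by (simp add: inner_add_right)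
    then show ?thesis using True by (simp add: orthogonal_def p_def r_def a'_def algebra_simps)
  next
    case False
    then have "y \<in> span S" using that by (auto intro: span_base)
    then show ?thesis using a'S rS
      by (simp add: orthogonal_def p_def r_def inner_diff_left algebra_simps)
  qed
  then have "\<forall>y\<in>span (insert a S). orthogonal (x - p) y"
    using orthogonal_to_span by blast
  then show ?case using pin by (auto simp: orthogonal_def)
qed

lemma pyth:
  fixes a b :: "'a::real_inner"
  assumes "inner a b = 0"
  shows "(norm (a + b))\<^sup>2 = (norm a)\<^sup>2 + (norm b)\<^sup>2"
  using assms norm_add_Pythagorean orthogonal_def by blast

lemma infdist_attain:
  fixes S :: "'a::real_inner set"
  assumes "finite S"
  shows "\<exists>p\<in>span S. norm (v - c - p) \<le> infdist v ((+) c ` span S)"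
proof -
  obtain p where p: "p \<in> span S" "\<forall>y\<in>span S. inner (v - c - p) y = 0"
    using decomp[OF assms] by blast
  have "norm (v - c - p) \<le> dist v a" if aK: "a \<in> (+) c ` span S" for a
  proof -
    obtain x where x: "x \<in> span S" "a = c + x" using aK by blast
    have "inner (v - c - p) (p - x) = 0" using p x by (simp add: span_diff)
    then have "(norm ((v - c - p) + (p - x)))\<^sup>2 = (norm (v - c - p))\<^sup>2 + (norm (p - x))\<^sup>2"
      by (rule pyth)
    moreover have "(v - c - p) + (p - x) = v - a" using x by simp
    ultimately have "(norm (v - c - p))\<^sup>2 \<le> (norm (v - a))\<^sup>2" by simp
    then show ?thesis by (metis dist_norm norm_ge_zero power2_le_imp_le)
  qed
  then have "norm (v - c - p) \<le> infdist v ((+) c ` span S)"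
    unfolding infdist_def using span_zero[of S] by (auto intro!: cINF_greatest)
  then show ?thesis using p by blast
qed

lemma argmin_unique:
  fixes f :: "'b \<Rightarrow> 'c::linorder"
  assumes "P x" "\<forall>y. P y \<longrightarrow> f x \<le> f y" "\<forall>y. P y \<longrightarrow> f y \<le> f x \<longrightarrow> y = x"
  shows "arg_min f P = x"
  unfolding arg_min_def
  apply (rule some_equality)
  using assms by (auto simp: is_arg_min_def not_less)

lemma proj_exists:
  fixes W :: "'a::real_inner set"
  assumes "fin_dim_subspace W"
  shows "\<exists>Q. linear Q \<and> (\<forall>x. Q x \<in> W) \<and> (\<forall>x. x - Q x \<in> W\<^sup>\<bottom>)
     \<and> (\<forall>x p. p \<in> W \<longrightarrow> x - p \<in> W\<^sup>\<bottom> \<longrightarrow> Q x = p)"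
proof -
  obtain S where S: "finite S" "W = span S" "subspace W"
    using assms by (auto simp: fin_dim_subspace_def)
  have ex: "\<exists>p. p \<in> W \<and> x - p \<in> W\<^sup>\<bottom>" for x
  proof -
    obtain p where "p \<in> span S" "\<forall>y\<in>span S. inner (x - p) y = 0"
      using decomp[OF S(1)] by blast
    then show ?thesis using S by (auto simp: orthogonal_comp_def orthogonal_def inner_commute)
  qed
  define Q where "Q x = (SOME p. p \<in> W \<and> x - p \<in> W\<^sup>\<bottom>)" for x
  have Q: "Q x \<in> W" "x - Q x \<in> W\<^sup>\<bottom>" for x
    using someI_ex[OF ex[of x]] unfolding Q_def by auto
  have U: "Q x = p" if "p \<in> W" "x - p \<in> W\<^sup>\<bottom>" for x p
  proof -
    have "Q x - p = (x - p) - (x - Q x)" by simp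
    also have "\<dots> \<in> W\<^sup>\<bottom>" using that Q subspace_orthogonal_comp subspace_diff by blast
    finally have "Q x - p \<in> W \<inter> W\<^sup>\<bottom>" using S(3) Q that subspace_diff by blast
    then show ?thesis using orthogonal_Int_0[OF S(3)] by auto
  qed
  have "linear Q"
  proof (rule linearI)
    fix x y
    show "Q (x + y) = Q x + Q y"
    proof (rule U)
      show "Q x + Q y \<in> W" using Q S(3) subspace_add by blast
      have "x + y - (Q x + Q y) = (x - Q x) + (y - Q y)" by simp
      then show "x + y - (Q x + Q y) \<in> W\<^sup>\<bottom>"
        using Q subspace_orthogonal_comp subspace_add by metis
    qed
  next
    fix c :: real and x
    show "Q (c *\<^sub>R x) = c *\<^sub>R Q x"
    proof (rule U)
      show "c *\<^sub>R Q x \<in> W" using Q S(3) subspace_scale by blast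
      have "c *\<^sub>R x - c *\<^sub>R Q x = c *\<^sub>R (x - Q x)" by (simp add: scaleR_diff_right)
      then show "c *\<^sub>R x - c *\<^sub>R Q x \<in> W\<^sup>\<bottom>"
        using Q subspace_orthogonal_comp subspace_scale by metis
    qed
  qed
  then show ?thesis using Q U by blast
qed

lemma backward:
  fixes W Vn :: "'a::real_inner set"
  assumes W: "fin_dim_subspace W" and V: "fin_dim_subspace Vn" and I: "Vn \<inter> W\<^sup>\<bottom> = {0}"
  shows "\<exists>B. affine_map_on W B \<and> (\<forall>w\<in>W. B w \<in> W\<^sup>\<bottom>)
           \<and> (\<forall>w\<in>W. affine_pbdw W ubar Vn w = w + B w)"
proof -
  obtain Q where lin: "linear Q" and QW: "\<And>x. Q x \<in> W" and Qp: "\<And>x. x - Q x \<in> W\<^sup>\<bottom>"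
    and QU: "\<And>x p. p \<in> W \<Longrightarrow> x - p \<in> W\<^sup>\<bottom> \<Longrightarrow> Q x = p"
    using proj_exists[OF W] by blast
  obtain Sv where Sv: "finite Sv" "Vn = span Sv" using V by (auto simp: fin_dim_subspace_def)
  have sV: "subspace Vn" using V by (simp add: fin_dim_subspace_def)
  have sW: "subspace W" using W by (simp add: fin_dim_subspace_def)
  have sP: "subspace (W\<^sup>\<bottom>)" by (rule subspace_orthogonal_comp)
  have Qid: "Q x = x" if "x \<in> W" for x using QU[of x x] that subspace_0[OF sP] by simp
  have Q0: "Q z = 0" if "z \<in> W\<^sup>\<bottom>" for z using QU[of 0 z] that subspace_0[OF sW] by simp
  note Qadd = linear_add[OF lin] and Qdiff = linear_diff[OF lin] and Qscale = linear_scale[OF lin]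
  have injQ: "x = 0" if "x \<in> Vn" "Q x = 0" for x
    using Qp[of x] that I by auto
  have Xex: "\<exists>x. x \<in> Vn \<and> (\<forall>y\<in>Vn. inner (w - Q ubar - Q x) (Q y) = 0)" for w
  proof -
    obtain p where p: "p \<in> span (Q ` Sv)" "\<forall>y\<in>span (Q ` Sv). inner (w - Q ubar - p) y = 0"
      using decomp[of "Q ` Sv" "w - Q ubar"] Sv(1) by blast
    have eq: "span (Q ` Sv) = Q ` Vn" using span_linear_image[OF lin] Sv(2) by simp
    then obtain x where "x \<in> Vn" "p = Q x" using p(1) by auto
    then show ?thesis using p(2) eq by auto
  qed
  define X where "X w = (SOME x. x \<in> Vn \<and> (\<forall>y\<in>Vn. inner (w - Q ubar - Q x) (Q y) = 0))" for w
  have XV: "X w \<in> Vn" and Xo: "\<And>y. y \<in> Vn \<Longrightarrow> inner (w - Q ubar - Q (X w)) (Q y) = 0" for w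
    using someI_ex[OF Xex[of w]] unfolding X_def by auto
  have XU: "X w = x" if "x \<in> Vn" "\<forall>y\<in>Vn. inner (w - Q ubar - Q x) (Q y) = 0" for w x
  proof -
    define d where "d = X w - x"
    have dV: "d \<in> Vn" using XV that(1) sV subspace_diff d_def by blast
    have "inner (Q d) (Q d) = inner (w - Q ubar - Q x) (Q d) - inner (w - Q ubar - Q (X w)) (Q d)"
      by (simp add: d_def Qdiff inner_diff_left)
    also have "\<dots> = 0" using that dV Xo[OF dV] by simp
    finally have "Q d = 0" by simp
    then show ?thesis using injQ[OF dV] d_def by simp
  qed
  define Bf where "Bf w = ubar + X w - Q (ubar + X w)" for w
  have BfP: "Bf w \<in> W\<^sup>\<bottom>" for w unfolding Bf_def using Qp by simp
  have Xaff: "X (t *\<^sub>R a + (1 - t) *\<^sub>R b) = t *\<^sub>R X a + (1 - t) *\<^sub>R X b" for t a b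
  proof (rule XU)
    show "t *\<^sub>R X a + (1 - t) *\<^sub>R X b \<in> Vn" using XV sV subspace_add subspace_scale by blast
    show "\<forall>y\<in>Vn. inner (t *\<^sub>R a + (1 - t) *\<^sub>R b - Q ubar - Q (t *\<^sub>R X a + (1 - t) *\<^sub>R X b)) (Q y) = 0"
    proof
      fix y assume y: "y \<in> Vn"
      have "t *\<^sub>R a + (1 - t) *\<^sub>R b - Q ubar - Q (t *\<^sub>R X a + (1 - t) *\<^sub>R X b)
          = t *\<^sub>R (a - Q ubar - Q (X a)) + (1 - t) *\<^sub>R (b - Q ubar - Q (X b))"
        unfolding Qadd Qscale by (simp add: algebra_simps)
      then show "inner (t *\<^sub>R a + (1 - t) *\<^sub>R b - Q ubar - Q (t *\<^sub>R X a + (1 - t) *\<^sub>R X b)) (Q y) = 0"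
        using Xo[OF y, of a] Xo[OF y, of b] by (simp add: inner_add_left)
    qed
  qed
  have aff: "affine_map_on W Bf"
    unfolding affine_map_on_def
  proof (intro ballI allI)
    fix x y t assume "x \<in> W" "y \<in> W"
    show "Bf (t *\<^sub>R x + (1 - t) *\<^sub>R y) = t *\<^sub>R Bf x + (1 - t) *\<^sub>R Bf y"
      unfolding Bf_def Xaff by (simp add: Qadd Qscale Qdiff algebra_simps)
  qed
  have main: "affine_pbdw W ubar Vn w = w + Bf w" if w: "w \<in> W" for w
  proof -
    define xs where "xs = X w"
    define d where "d = norm (w - Q ubar - Q xs)"
    define K where "K = (+) ubar ` Vn"
    define F where "F = (+) w ` (W\<^sup>\<bottom>)"
    define vs where "vs = w + Bf w"
    have key: "(norm (v - (ubar + x)))\<^sup>2 = d\<^sup>2 + (norm (Q (xs - x)))\<^sup>2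
                 + (norm ((v - (ubar + x)) - Q (v - (ubar + x))))\<^sup>2"
      if v: "v \<in> F" and x: "x \<in> Vn" for v x
    proof -
      obtain z where z: "z \<in> W\<^sup>\<bottom>" "v = w + z" using v unfolding F_def by auto
      define e where "e = v - (ubar + x)"
      have Qv: "Q v = w" using z Qid[OF w] Q0[OF z(1)] Qadd by simp
      have "Q e = Q v - Q ubar - Q x" unfolding e_def by (simp only: Qdiff Qadd diff_diff_eq)
      also have "\<dots> = (w - Q ubar - Q xs) + (Q xs - Q x)" unfolding Qv by simp
      finally have Qe: "Q e = (w - Q ubar - Q xs) + Q (xs - x)" by (simp only: Qdiff)
      have "inner (Q e) (e - Q e) = 0"
        using QW[of e] Qp[of e] by (simp add: orthogonal_comp_def orthogonal_def)
      then have 1: "(norm e)\<^sup>2 = (norm (Q e))\<^sup>2 + (norm (e - Q e))\<^sup>2"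
        using pyth[of "Q e" "e - Q e"] by simp
      have xsx: "xs - x \<in> Vn" using XV x sV subspace_diff xs_def by blast
      have "inner (w - Q ubar - Q xs) (Q (xs - x)) = 0" using Xo[OF xsx] xs_def by simp
      then have "(norm (Q e))\<^sup>2 = d\<^sup>2 + (norm (Q (xs - x)))\<^sup>2"
        unfolding Qe d_def by (rule pyth)
      then show ?thesis using 1 e_def by simp
    qed
    have lower: "d \<le> norm (v - (ubar + x))" if "v \<in> F" "x \<in> Vn" for v x
    proof -
      have "d\<^sup>2 \<le> (norm (v - (ubar + x)))\<^sup>2" using key[OF that] by simp
      then show ?thesis by (rule power2_le_imp_le[OF _ norm_ge_zero])
    qed
    have Kne: "K \<noteq> {}" using K_def sV subspace_0 by blast
    have inflow: "d \<le> infdist v K" if "v \<in> F" for v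
    proof -
      have "\<And>a. a \<in> K \<Longrightarrow> d \<le> dist v a" using lower[OF that] K_def by (auto simp: dist_norm)
      then have "d \<le> (INF a\<in>K. dist v a)" by (rule cINF_greatest[OF Kne])
      then show ?thesis using infdist_notempty[OF Kne] by simp
    qed
    have vsF: "vs \<in> F" unfolding vs_def F_def using BfP by blast
    have vsK: "infdist vs K \<le> d"
    proof -
      have inK: "ubar + xs \<in> K" using K_def XV xs_def by blast
      have Bfw: "Bf w = ubar + xs - (Q ubar + Q xs)" by (simp only: Bf_def xs_def Qadd)
      have "vs - (ubar + xs) = w - Q ubar - Q xs" unfolding vs_def Bfw by (simp add: algebra_simps)
      then have "dist vs (ubar + xs) = d"
        unfolding dist_norm d_def by simp
      then show ?thesis using infdist_le[OF inK, of vs] by simp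
    qed
    have uniq: "v = vs" if v: "v \<in> F" and vd: "infdist v K \<le> d" for v
    proof -
      obtain p where p: "p \<in> Vn" "norm (v - ubar - p) \<le> infdist v K"
        using infdist_attain[OF Sv(1), of v ubar] Sv(2) K_def by blast
      have "norm (v - (ubar + p)) = norm (v - ubar - p)" by (simp only: diff_diff_eq)
      then have n: "norm (v - (ubar + p)) \<le> d" using p(2) vd by linarith
      have le: "(norm (v - (ubar + p)))\<^sup>2 \<le> d\<^sup>2"
        using power_mono[OF n norm_ge_zero] .
      have k: "(norm (v - (ubar + p)))\<^sup>2 = d\<^sup>2 + (norm (Q (xs - p)))\<^sup>2
                 + (norm ((v - (ubar + p)) - Q (v - (ubar + p))))\<^sup>2" by (rule key[OF v p(1)])
      have "(norm (Q (xs - p)))\<^sup>2 = 0" "(norm ((v - (ubar + p)) - Q (v - (ubar + p))))\<^sup>2 = 0"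
        using le k zero_le_power2[of "norm (Q (xs - p))"]
          zero_le_power2[of "norm ((v - (ubar + p)) - Q (v - (ubar + p)))"] by linarith+
      then have a: "Q (xs - p) = 0" and b: "v - (ubar + p) = Q (v - (ubar + p))" by auto
      have xsp: "xs - p \<in> Vn" using XV p(1) sV subspace_diff xs_def by blast
      have pxs: "p = xs" using injQ[OF xsp a] by simp
      obtain z where z: "z \<in> W\<^sup>\<bottom>" "v = w + z" using v unfolding F_def by auto
      have Qv: "Q v = w" using z Qid[OF w] Q0[OF z(1)] Qadd by simp
      have "Q (v - (ubar + p)) = Q v - Q ubar - Q p" by (simp only: Qdiff Qadd diff_diff_eq)
      then have "Q (v - (ubar + p)) = w - Q ubar - Q xs" unfolding Qv pxs .
      then have c: "v - (ubar + xs) = w - Q ubar - Q xs" using b pxs by simp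
      have Bfw: "Bf w = ubar + xs - (Q ubar + Q xs)" by (simp only: Bf_def xs_def Qadd)
      have "vs - (ubar + xs) = w - Q ubar - Q xs" unfolding vs_def Bfw by (simp add: algebra_simps)
      then have "v - (ubar + xs) = vs - (ubar + xs)" using c by simp
      then show ?thesis by simp
    qed
    have "arg_min (\<lambda>v. infdist v K) (\<lambda>v. v \<in> F) = vs"
    proof (rule argmin_unique)
      show "vs \<in> F" by (rule vsF)
      show "\<forall>y. y \<in> F \<longrightarrow> infdist vs K \<le> infdist y K"
      proof (intro allI impI)
        fix y assume "y \<in> F" then show "infdist vs K \<le> infdist y K" using vsK inflow[of y] by linarith
      qed
      show "\<forall>y. y \<in> F \<longrightarrow> infdist y K \<le> infdist vs K \<longrightarrow> y = vs"
      proof (intro allI impI)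
        fix y assume "y \<in> F" "infdist y K \<le> infdist vs K"
        then show "y = vs" using vsK uniq[of y] by linarith
      qed
    qed
    then show ?thesis unfolding affine_pbdw_def K_def F_def vs_def .
  qed
  show ?thesis using aff BfP main by blast
qed

lemma forward:
  fixes W :: "'a::real_inner set" and B :: "'a \<Rightarrow> 'a"
  assumes W: "fin_dim_subspace W" and aff: "affine_map_on W B" and BP: "\<forall>w\<in>W. B w \<in> W\<^sup>\<bottom>"
  shows "\<exists>Vn. fin_dim_subspace Vn \<and> dim Vn \<le> dim W \<and> Vn \<inter> W\<^sup>\<bottom> = {0}
           \<and> (\<forall>w\<in>W. affine_pbdw W (B 0) Vn w = w + B w)"
proof -
  obtain Q where lin: "linear Q" and QW: "\<And>x. Q x \<in> W" and Qp: "\<And>x. x - Q x \<in> W\<^sup>\<bottom>"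
    and QU: "\<And>x p. p \<in> W \<Longrightarrow> x - p \<in> W\<^sup>\<bottom> \<Longrightarrow> Q x = p"
    using proj_exists[OF W] by blast
  obtain S where S: "finite S" "W = span S" using W by (auto simp: fin_dim_subspace_def)
  have sW: "subspace W" using W by (simp add: fin_dim_subspace_def)
  have sP: "subspace (W\<^sup>\<bottom>)" by (rule subspace_orthogonal_comp)
  have Qid: "Q x = x" if "x \<in> W" for x using QU[of x x] that subspace_0[OF sP] by simp
  have W0: "0 \<in> W" using subspace_0[OF sW] .
  define L where "L x = B x - B 0" for x
  have LP: "L x \<in> W\<^sup>\<bottom>" if "x \<in> W" for x
    unfolding L_def using BP that W0 sP subspace_diff by blast
  have Lscale: "L (c *\<^sub>R x) = c *\<^sub>R L x" if "x \<in> W" for c x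
  proof -
    have "B (c *\<^sub>R x + (1 - c) *\<^sub>R 0) = c *\<^sub>R B x + (1 - c) *\<^sub>R B 0"
      using aff that W0 unfolding affine_map_on_def by blast
    then show ?thesis unfolding L_def by (simp add: algebra_simps)
  qed
  have Ladd: "L (x + y) = L x + L y" if "x \<in> W" "y \<in> W" for x y
  proof -
    have x2: "2 *\<^sub>R x \<in> W" "2 *\<^sub>R y \<in> W" using that sW subspace_scale by blast+
    have "B ((1/2) *\<^sub>R (2 *\<^sub>R x) + (1 - 1/2) *\<^sub>R (2 *\<^sub>R y)) = (1/2) *\<^sub>R B (2 *\<^sub>R x) + (1 - 1/2) *\<^sub>R B (2 *\<^sub>R y)"
      using aff x2 unfolding affine_map_on_def by blast
    then have "B (x + y) = (1/2) *\<^sub>R B (2 *\<^sub>R x) + (1/2) *\<^sub>R B (2 *\<^sub>R y)" by simp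
    moreover have "B (2 *\<^sub>R x) = B 0 + 2 *\<^sub>R L x" "B (2 *\<^sub>R y) = B 0 + 2 *\<^sub>R L y"
      using Lscale[OF that(1), of 2] Lscale[OF that(2), of 2] unfolding L_def by (simp_all add: algebra_simps)
    moreover have "(1/2) *\<^sub>R B 0 + (1/2) *\<^sub>R B 0 = B 0"
      by (simp add: scaleR_add_left[symmetric])
    ultimately show ?thesis unfolding L_def by (simp add: algebra_simps)
  qed
  define g where "g x = Q x + L (Q x)" for x
  have glin: "linear g"
  proof (rule linearI)
    fix x y show "g (x + y) = g x + g y"
      unfolding g_def linear_add[OF lin] using Ladd[OF QW QW] by simp
  next
    fix c :: real and x show "g (c *\<^sub>R x) = c *\<^sub>R g x"
      unfolding g_def linear_scale[OF lin] using Lscale[OF QW] by (simp add: scaleR_add_right)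
  qed
  have gW: "g w = w + L w" if "w \<in> W" for w using Qid[OF that] g_def by simp
  define Vn where "Vn = g ` W"
  have Vspan: "Vn = span (g ` S)" using span_linear_image[OF glin] S(2) Vn_def by simp
  have fV: "fin_dim_subspace Vn"
    unfolding fin_dim_subspace_def using Vspan S(1) by auto
  have dV: "dim Vn \<le> dim W"
  proof -
    obtain Bs where Bs: "Bs \<subseteq> W" "independent Bs" "W \<subseteq> span Bs" "card Bs = dim W"
      using basis_exists by blast
    have fB: "finite Bs" using independent_span_bound[OF S(1) Bs(2)] Bs(1) S(2) by blast
    have "Vn \<subseteq> span (g ` Bs)"
      unfolding Vn_def span_linear_image[OF glin] using Bs(3) by blast
    then have "dim Vn \<le> card (g ` Bs)" using dim_le_card fB by blast
    also have "\<dots> \<le> card Bs" using card_image_le fB by blast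
    finally show ?thesis using Bs(4) by simp
  qed
  have IV: "Vn \<inter> W\<^sup>\<bottom> = {0}"
  proof
    have "g 0 \<in> Vn" using W0 Vn_def by blast
    then have "0 \<in> Vn" using linear_0[OF glin] by simp
    then show "{0} \<subseteq> Vn \<inter> W\<^sup>\<bottom>" using subspace_0[OF sP] by blast
    show "Vn \<inter> W\<^sup>\<bottom> \<subseteq> {0}"
    proof
      fix u assume u: "u \<in> Vn \<inter> W\<^sup>\<bottom>"
      then obtain w where w: "w \<in> W" "u = w + L w" using Vn_def gW by auto
      have wu: "w = u - L w" using w by simp
      have "u - L w \<in> W\<^sup>\<bottom>" using u LP[OF w(1)] subspace_diff[OF sP] by blast
      then have "w \<in> W\<^sup>\<bottom>" using wu by simp
      then have "w = 0" using w(1) orthogonal_Int_0[OF sW] by auto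
      then show "u \<in> {0}" using w unfolding L_def by simp
    qed
  qed
  have main: "affine_pbdw W (B 0) Vn w = w + B w" if w: "w \<in> W" for w
  proof -
    define K where "K = (+) (B 0) ` Vn"
    define F where "F = (+) w ` (W\<^sup>\<bottom>)"
    define vs where "vs = w + B w"
    have vsF: "vs \<in> F" unfolding vs_def F_def using BP w by blast
    have "vs = B 0 + g w" using gW[OF w] vs_def L_def by simp
    then have vsK: "infdist vs K = 0" unfolding K_def Vn_def using w by auto
    have uniq: "v = vs" if v: "v \<in> F" and vd: "infdist v K \<le> 0" for v
    proof -
      have "\<exists>p\<in>span (g ` S). norm (v - B 0 - p) \<le> infdist v ((+) (B 0) ` span (g ` S))"
        using infdist_attain[OF finite_imageI[OF S(1)], of g v "B 0"] .
      then obtain p where p: "p \<in> Vn" "norm (v - B 0 - p) \<le> infdist v K"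
        unfolding Vspan[symmetric] K_def[symmetric] by blast
      then have "norm (v - B 0 - p) = 0" using vd norm_ge_zero[of "v - B 0 - p"] by linarith
      then have "v - B 0 - p = 0" by simp
      then have "v = B 0 + p" by (simp add: diff_diff_eq)
      moreover obtain w' where w': "w' \<in> W" "p = w' + L w'" using p(1) Vn_def gW by auto
      moreover obtain z where z: "z \<in> W\<^sup>\<bottom>" "v = w + z" using v unfolding F_def by auto
      ultimately have eq: "B 0 + (w' + L w') = w + z" by simp
      have "w' - w = (B 0 + (w' + L w')) - B 0 - L w' - w" by (simp add: algebra_simps)
      also have "\<dots> = (w + z) - B 0 - L w' - w" by (simp only: eq)
      also have "\<dots> = z - B 0 - L w'" by (simp add: algebra_simps)
      finally have "w' - w = z - B 0 - L w'" .
      moreover have "z - B 0 - L w' \<in> W\<^sup>\<bottom>"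
        using z(1) BP W0 LP[OF w'(1)] sP subspace_diff by blast
      ultimately have "w' - w \<in> W\<^sup>\<bottom>" by simp
      moreover have "w' - w \<in> W" using w'(1) w subspace_diff[OF sW] by blast
      ultimately have "w' - w \<in> W \<inter> W\<^sup>\<bottom>" by blast
      then have "w' = w" using orthogonal_Int_0[OF sW] by auto
      then show ?thesis using \<open>v = B 0 + p\<close> w' vs_def L_def by simp
    qed
    have "arg_min (\<lambda>v. infdist v K) (\<lambda>v. v \<in> F) = vs"
    proof (rule argmin_unique)
      show "vs \<in> F" by (rule vsF)
      show "\<forall>y. y \<in> F \<longrightarrow> infdist vs K \<le> infdist y K" by (simp add: vsK infdist_nonneg)
      show "\<forall>y. y \<in> F \<longrightarrow> infdist y K \<le> infdist vs K \<longrightarrow> y = vs"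
        using vsK uniq by simp
    qed
    then show ?thesis unfolding affine_pbdw_def K_def F_def vs_def .
  qed
  show ?thesis using fV dV IV main by blast
qed


theorem mainTheorem1:
  fixes W :: "'a::{real_inner, complete_space} set"
    and A :: "'a \<Rightarrow> 'a"
  assumes W: "fin_dim_subspace W"
  shows "(\<exists>B :: 'a \<Rightarrow> 'a. affine_map_on W B \<and> (\<forall>w\<in>W. B w \<in> W\<^sup>\<bottom>)
            \<and> (\<forall>w\<in>W. A w = w + B w))
     \<longleftrightarrow> (\<exists>ubar :: 'a. \<exists>Vn :: 'a set. fin_dim_subspace Vn \<and> dim Vn \<le> dim W
            \<and> Vn \<inter> W\<^sup>\<bottom> = {0}
            \<and> (\<forall>w\<in>W. A w = affine_pbdw W ubar Vn w))"
proof
  assume "\<exists>B :: 'a \<Rightarrow> 'a. affine_map_on W B \<and> (\<forall>w\<in>W. B w \<in> W\<^sup>\<bottom>)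
            \<and> (\<forall>w\<in>W. A w = w + B w)"
  then obtain B where B: "affine_map_on W B" "\<forall>w\<in>W. B w \<in> W\<^sup>\<bottom>" "\<forall>w\<in>W. A w = w + B w"
    by blast
  obtain Vn where Vn: "fin_dim_subspace Vn" "dim Vn \<le> dim W" "Vn \<inter> W\<^sup>\<bottom> = {0}"
    "\<forall>w\<in>W. affine_pbdw W (B 0) Vn w = w + B w"
    using forward[OF W B(1) B(2)] by blast
  have "\<forall>w\<in>W. A w = affine_pbdw W (B 0) Vn w" using Vn(4) B(3) by simp
  then show "\<exists>ubar :: 'a. \<exists>Vn :: 'a set. fin_dim_subspace Vn \<and> dim Vn \<le> dim W
            \<and> Vn \<inter> W\<^sup>\<bottom> = {0}
            \<and> (\<forall>w\<in>W. A w = affine_pbdw W ubar Vn w)" using Vn(1-3) by blast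
next
  assume "\<exists>ubar :: 'a. \<exists>Vn :: 'a set. fin_dim_subspace Vn \<and> dim Vn \<le> dim W
            \<and> Vn \<inter> W\<^sup>\<bottom> = {0}
            \<and> (\<forall>w\<in>W. A w = affine_pbdw W ubar Vn w)"
  then obtain ubar Vn where V: "fin_dim_subspace Vn" "Vn \<inter> W\<^sup>\<bottom> = {0}"
    "\<forall>w\<in>W. A w = affine_pbdw W ubar Vn w" by blast
  obtain B where B: "affine_map_on W B" "\<forall>w\<in>W. B w \<in> W\<^sup>\<bottom>"
    "\<forall>w\<in>W. affine_pbdw W ubar Vn w = w + B w"
    using backward[OF W V(1) V(2), of ubar] by blast
  have "\<forall>w\<in>W. A w = w + B w" using V(3) B(3) by simp
  then show "\<exists>B :: 'a \<Rightarrow> 'a. affine_map_on W B \<and> (\<forall>w\<in>W. B w \<in> W\<^sup>\<bottom>)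
            \<and> (\<forall>w\<in>W. A w = w + B w)" using B(1,2) by blast
qed

end
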